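(* Let $X$ be a vector field on $\mathbb{S}^1$ with support function $\phi_X$, let $A\in\mathrm{O}_0(1,2)$ and $\sigma\in\mathbb{R}^{1,2}$. Then the support function of $A_*X+\Lambda(\sigma)$ satisfies $\mathrm{gr}(\phi_{A_*X+\Lambda(\sigma)})=\mathrm{Is}(A,\sigma)\,\mathrm{gr}(\phi_X)$.
   Context: $\mathbb{R}^{1,2}$ is $\mathbb{R}^3$ with $\langle x,y\rangle=-x_0y_0+x_1y_1+x_2y_2$; $\mathrm{O}_0(1,2)$ is the identity component of its linear isometry group, acting on the closed Klein disk $\overline{\mathbb{D}^2}$ (and on $\mathbb{S}^1$) by $A\cdot\eta=\Pi(A(1,\eta))$ where $\Pi(x_0,x_1,x_2)=(x_1/x_0,x_2/x_0)$. $A_*X$ is the pushforward of the vector field $X$ by the diffeomorphism $z\mapsto A\cdot z$ of $\mathbb{S}^1$. The Killing field $\Lambda(\sigma)$ (extended to $\mathbb{S}^1$) is $\eta\mapsto\mathrm{d}_{(1,\eta)}\Pi((1,\eta)\boxtimes\sigma)$, where $\langle x\boxtimes y,v\rangle=\det(x,y,v)$. The support function of a vector field $Y$ on $\mathbb{S}^1$ is $\phi_Y$ with $Y(z)=iz\phi_Y(z)$, and $\mathrm{gr}(\phi_Y)=\{(z,\phi_Y(z)):z\in\mathbb{S}^1\}\subset\overline{\mathbb{D}^2}\times\mathbb{R}$. The map $\mathrm{Is}(A,\sigma)$ acts on $\overline{\mathbb{D}^2}\times\mathbb{R}$ by $\mathrm{Is}(A,\sigma)(\eta,t)=\left(A\cdot\eta,\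 \frac{t}{-\langle A(1,\eta),(1,0,0)\rangle}+\langle(1,A\cdot\eta),\sigma\rangle\right)$. *)

theory Defs
  imports "HOL-Analysis.Analysis"
begin

text \<open>Minkowski space R^{1,2}: vectors x :: real^3 with x$1 = x_0, x$2 = x_1, x$3 = x_2.\<close>

definition mink :: "real^3 \<Rightarrow> real^3 \<Rightarrow> real" where
  "mink x y = - (x$1 * y$1) + x$2 * y$2 + x$3 * y$3"

definition O12 :: "(real^3^3) set" where
  "O12 = {A. \<forall>x y. mink (A *v x) (A *v y) = mink x y}"

definition O12_0 :: "(real^3^3) set" where
  "O12_0 = connected_component_set O12 (mat 1)"

text \<open>Points of the plane (Klein disk, circle) are complex numbers eta = eta_1 + i eta_2.\<close>

definition lift :: "complex \<Rightarrow> real^3" where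
  "lift \<eta> = vector [1, Re \<eta>, Im \<eta>]"

definition Pi :: "real^3 \<Rightarrow> complex" where
  "Pi x = Complex (x$2 / x$1) (x$3 / x$1)"

definition act :: "real^3^3 \<Rightarrow> complex \<Rightarrow> complex" where
  "act A \<eta> = Pi (A *v lift \<eta>)"

definition pushforward :: "real^3^3 \<Rightarrow> (complex \<Rightarrow> complex) \<Rightarrow> complex \<Rightarrow> complex" where
  "pushforward A X w =
     (let z = inv_into (sphere 0 1) (act A) w in frechet_derivative (act A) (at z) (X z))"

definition mcross :: "real^3 \<Rightarrow> real^3 \<Rightarrow> real^3" where
  "mcross x y = (THE u. \<forall>v. mink u v = det (vector [x, y, v] :: real^3^3))"

definition Killing :: "real^3 \<Rightarrow> complex \<Rightarrow> complex" where
  "Killing \<sigma> \<eta> = frechet_derivative Pi (at (lift \<eta>)) (mcross (lift \<eta>) \<sigma>)"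

definition supp :: "(complex \<Rightarrow> complex) \<Rightarrow> complex \<Rightarrow> real" where
  "supp Y z = (THE t::real. Y z = \<i> * z * complex_of_real t)"

definition gr :: "(complex \<Rightarrow> real) \<Rightarrow> (complex \<times> real) set" where
  "gr \<phi> = {(z, \<phi> z) | z. z \<in> sphere 0 1}"

definition Is :: "real^3^3 \<Rightarrow> real^3 \<Rightarrow> complex \<times> real \<Rightarrow> complex \<times> real" where
  "Is A \<sigma> p = (case p of (\<eta>, t) \<Rightarrow>
     (act A \<eta>, t / (- mink (A *v lift \<eta>) (vector [1, 0, 0])) + mink (lift (act A \<eta>)) \<sigma>))"

end

theory Submission imports Defs begin
lemma cof_alg:
  fixes a11 a12 a13 a21 a22 a23 a31 a32 a33 :: real
  assumes c11: "(-a11*a11 + a21*a21 + a31*a31) = -1"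
    and c22: "(-a12*a12 + a22*a22 + a32*a32) = 1"
    and c33: "(-a13*a13 + a23*a23 + a33*a33) = 1"
    and c12: "(-a11*a12 + a21*a22 + a31*a32) = 0"
    and c13: "(-a11*a13 + a21*a23 + a31*a33) = 0"
    and c23: "(-a12*a13 + a22*a23 + a32*a33) = 0"
    and d: "(a11*a22*a33 + a12*a23*a31 + a13*a21*a32 - a11*a23*a32 - a12*a21*a33 - a13*a22*a31) = 1"
  shows "(a22*a33 - a23*a32) = a11" "(- (a21*a33 - a23*a31)) = - a12" "(a21*a32 - a22*a31) = - a13" "(- (a12*a33 - a13*a32)) = - a21" "(a11*a33 - a13*a31) = a22" "(- (a11*a32 - a12*a31)) = a23" "(a12*a23 - a13*a22) = - a31" "(- (a11*a23 - a13*a21)) = a32" "(a11*a22 - a12*a21) = a33"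
proof -
  have e11a: "((a22*a33 - a23*a32)*(-a11*a11 + a21*a21 + a31*a31) + (- (a21*a33 - a23*a31))*(-a11*a12 + a21*a22 + a31*a32) + (a21*a32 - a22*a31)*(-a11*a13 + a21*a23 + a31*a33)) * (-1) = ((a22*a33 - a23*a32)*(-1) + (- (a21*a33 - a23*a31))*(0) + (a21*a32 - a22*a31)*(0)) * (-1)"
    by (simp only: c11 c22 c33 c12 c13 c23)
  have e11b: "((a22*a33 - a23*a32)*(-a11*a11 + a21*a21 + a31*a31) + (- (a21*a33 - a23*a31))*(-a11*a12 + a21*a22 + a31*a32) + (a21*a32 - a22*a31)*(-a11*a13 + a21*a23 + a31*a33)) * (-1) = (1) * a11 * (a11*a22*a33 + a12*a23*a31 + a13*a21*a32 - a11*a23*a32 - a12*a21*a33 - a13*a22*a31)"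
    by algebra
  have e11: "(a22*a33 - a23*a32) = 1 * a11"
    using e11a e11b d by simp
  have e12a: "((a22*a33 - a23*a32)*(-a11*a12 + a21*a22 + a31*a32) + (- (a21*a33 - a23*a31))*(-a12*a12 + a22*a22 + a32*a32) + (a21*a32 - a22*a31)*(-a12*a13 + a22*a23 + a32*a33)) * (1) = ((a22*a33 - a23*a32)*(0) + (- (a21*a33 - a23*a31))*(1) + (a21*a32 - a22*a31)*(0)) * (1)"
    by (simp only: c11 c22 c33 c12 c13 c23)
  have e12b: "((a22*a33 - a23*a32)*(-a11*a12 + a21*a22 + a31*a32) + (- (a21*a33 - a23*a31))*(-a12*a12 + a22*a22 + a32*a32) + (a21*a32 - a22*a31)*(-a12*a13 + a22*a23 + a32*a33)) * (1) = (-1) * a12 * (a11*a22*a33 + a12*a23*a31 + a13*a21*a32 - a11*a23*a32 - a12*a21*a33 - a13*a22*a31)"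
    by algebra
  have e12: "(- (a21*a33 - a23*a31)) = -1 * a12"
    using e12a e12b d by simp
  have e13a: "((a22*a33 - a23*a32)*(-a11*a13 + a21*a23 + a31*a33) + (- (a21*a33 - a23*a31))*(-a12*a13 + a22*a23 + a32*a33) + (a21*a32 - a22*a31)*(-a13*a13 + a23*a23 + a33*a33)) * (1) = ((a22*a33 - a23*a32)*(0) + (- (a21*a33 - a23*a31))*(0) + (a21*a32 - a22*a31)*(1)) * (1)"
    by (simp only: c11 c22 c33 c12 c13 c23)
  have e13b: "((a22*a33 - a23*a32)*(-a11*a13 + a21*a23 + a31*a33) + (- (a21*a33 - a23*a31))*(-a12*a13 + a22*a23 + a32*a33) + (a21*a32 - a22*a31)*(-a13*a13 + a23*a23 + a33*a33)) * (1) = (-1) * a13 * (a11*a22*a33 + a12*a23*a31 + a13*a21*a32 - a11*a23*a32 - a12*a21*a33 - a13*a22*a31)"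
    by algebra
  have e13: "(a21*a32 - a22*a31) = -1 * a13"
    using e13a e13b d by simp
  have e21a: "((- (a12*a33 - a13*a32))*(-a11*a11 + a21*a21 + a31*a31) + (a11*a33 - a13*a31)*(-a11*a12 + a21*a22 + a31*a32) + (- (a11*a32 - a12*a31))*(-a11*a13 + a21*a23 + a31*a33)) * (-1) = ((- (a12*a33 - a13*a32))*(-1) + (a11*a33 - a13*a31)*(0) + (- (a11*a32 - a12*a31))*(0)) * (-1)"
    by (simp only: c11 c22 c33 c12 c13 c23)
  have e21b: "((- (a12*a33 - a13*a32))*(-a11*a11 + a21*a21 + a31*a31) + (a11*a33 - a13*a31)*(-a11*a12 + a21*a22 + a31*a32) + (- (a11*a32 - a12*a31))*(-a11*a13 + a21*a23 + a31*a33)) * (-1) = (-1) * a21 * (a11*a22*a33 + a12*a23*a31 + a13*a21*a32 - a11*a23*a32 - a12*a21*a33 - a13*a22*a31)"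
    by algebra
  have e21: "(- (a12*a33 - a13*a32)) = -1 * a21"
    using e21a e21b d by simp
  have e22a: "((- (a12*a33 - a13*a32))*(-a11*a12 + a21*a22 + a31*a32) + (a11*a33 - a13*a31)*(-a12*a12 + a22*a22 + a32*a32) + (- (a11*a32 - a12*a31))*(-a12*a13 + a22*a23 + a32*a33)) * (1) = ((- (a12*a33 - a13*a32))*(0) + (a11*a33 - a13*a31)*(1) + (- (a11*a32 - a12*a31))*(0)) * (1)"
    by (simp only: c11 c22 c33 c12 c13 c23)
  have e22b: "((- (a12*a33 - a13*a32))*(-a11*a12 + a21*a22 + a31*a32) + (a11*a33 - a13*a31)*(-a12*a12 + a22*a22 + a32*a32) + (- (a11*a32 - a12*a31))*(-a12*a13 + a22*a23 + a32*a33)) * (1) = (1) * a22 * (a11*a22*a33 + a12*a23*a31 + a13*a21*a32 - a11*a23*a32 - a12*a21*a33 - a13*a22*a31)"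
    by algebra
  have e22: "(a11*a33 - a13*a31) = 1 * a22"
    using e22a e22b d by simp
  have e23a: "((- (a12*a33 - a13*a32))*(-a11*a13 + a21*a23 + a31*a33) + (a11*a33 - a13*a31)*(-a12*a13 + a22*a23 + a32*a33) + (- (a11*a32 - a12*a31))*(-a13*a13 + a23*a23 + a33*a33)) * (1) = ((- (a12*a33 - a13*a32))*(0) + (a11*a33 - a13*a31)*(0) + (- (a11*a32 - a12*a31))*(1)) * (1)"
    by (simp only: c11 c22 c33 c12 c13 c23)
  have e23b: "((- (a12*a33 - a13*a32))*(-a11*a13 + a21*a23 + a31*a33) + (a11*a33 - a13*a31)*(-a12*a13 + a22*a23 + a32*a33) + (- (a11*a32 - a12*a31))*(-a13*a13 + a23*a23 + a33*a33)) * (1) = (1) * a23 * (a11*a22*a33 + a12*a23*a31 + a13*a21*a32 - a11*a23*a32 - a12*a21*a33 - a13*a22*a31)"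
    by algebra
  have e23: "(- (a11*a32 - a12*a31)) = 1 * a23"
    using e23a e23b d by simp
  have e31a: "((a12*a23 - a13*a22)*(-a11*a11 + a21*a21 + a31*a31) + (- (a11*a23 - a13*a21))*(-a11*a12 + a21*a22 + a31*a32) + (a11*a22 - a12*a21)*(-a11*a13 + a21*a23 + a31*a33)) * (-1) = ((a12*a23 - a13*a22)*(-1) + (- (a11*a23 - a13*a21))*(0) + (a11*a22 - a12*a21)*(0)) * (-1)"
    by (simp only: c11 c22 c33 c12 c13 c23)
  have e31b: "((a12*a23 - a13*a22)*(-a11*a11 + a21*a21 + a31*a31) + (- (a11*a23 - a13*a21))*(-a11*a12 + a21*a22 + a31*a32) + (a11*a22 - a12*a21)*(-a11*a13 + a21*a23 + a31*a33)) * (-1) = (-1) * a31 * (a11*a22*a33 + a12*a23*a31 + a13*a21*a32 - a11*a23*a32 - a12*a21*a33 - a13*a22*a31)"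
    by algebra
  have e31: "(a12*a23 - a13*a22) = -1 * a31"
    using e31a e31b d by simp
  have e32a: "((a12*a23 - a13*a22)*(-a11*a12 + a21*a22 + a31*a32) + (- (a11*a23 - a13*a21))*(-a12*a12 + a22*a22 + a32*a32) + (a11*a22 - a12*a21)*(-a12*a13 + a22*a23 + a32*a33)) * (1) = ((a12*a23 - a13*a22)*(0) + (- (a11*a23 - a13*a21))*(1) + (a11*a22 - a12*a21)*(0)) * (1)"
    by (simp only: c11 c22 c33 c12 c13 c23)
  have e32b: "((a12*a23 - a13*a22)*(-a11*a12 + a21*a22 + a31*a32) + (- (a11*a23 - a13*a21))*(-a12*a12 + a22*a22 + a32*a32) + (a11*a22 - a12*a21)*(-a12*a13 + a22*a23 + a32*a33)) * (1) = (1) * a32 * (a11*a22*a33 + a12*a23*a31 + a13*a21*a32 - a11*a23*a32 - a12*a21*a33 - a13*a22*a31)"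
    by algebra
  have e32: "(- (a11*a23 - a13*a21)) = 1 * a32"
    using e32a e32b d by simp
  have e33a: "((a12*a23 - a13*a22)*(-a11*a13 + a21*a23 + a31*a33) + (- (a11*a23 - a13*a21))*(-a12*a13 + a22*a23 + a32*a33) + (a11*a22 - a12*a21)*(-a13*a13 + a23*a23 + a33*a33)) * (1) = ((a12*a23 - a13*a22)*(0) + (- (a11*a23 - a13*a21))*(0) + (a11*a22 - a12*a21)*(1)) * (1)"
    by (simp only: c11 c22 c33 c12 c13 c23)
  have e33b: "((a12*a23 - a13*a22)*(-a11*a13 + a21*a23 + a31*a33) + (- (a11*a23 - a13*a21))*(-a12*a13 + a22*a23 + a32*a33) + (a11*a22 - a12*a21)*(-a13*a13 + a23*a23 + a33*a33)) * (1) = (1) * a33 * (a11*a22*a33 + a12*a23*a31 + a13*a21*a32 - a11*a23*a32 - a12*a21*a33 - a13*a22*a31)"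
    by algebra
  have e33: "(a11*a22 - a12*a21) = 1 * a33"
    using e33a e33b d by simp
  show "(a22*a33 - a23*a32) = a11" using e11 by simp
  show "(- (a21*a33 - a23*a31)) = - a12" using e12 by simp
  show "(a21*a32 - a22*a31) = - a13" using e13 by simp
  show "(- (a12*a33 - a13*a32)) = - a21" using e21 by simp
  show "(a11*a33 - a13*a31) = a22" using e22 by simp
  show "(- (a11*a32 - a12*a31)) = a23" using e23 by simp
  show "(a12*a23 - a13*a22) = - a31" using e31 by simp
  show "(- (a11*a23 - a13*a21)) = a32" using e32 by simp
  show "(a11*a22 - a12*a21) = a33" using e33 by simp
qed

lemma mv3: "(A *v x) $ i = A$i$1 * x$1 + A$i$2 * x$2 + A$i$3 * x$3" for A :: "real^3^3"
  by (simp add: matrix_vector_mult_def sum_3)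

lemma O12_eqs:
  assumes "A \<in> O12"
  shows "(-(A$1$1)*(A$1$1) + (A$2$1)*(A$2$1) + (A$3$1)*(A$3$1)) = -1"
    "(-(A$1$2)*(A$1$2) + (A$2$2)*(A$2$2) + (A$3$2)*(A$3$2)) = 1"
    "(-(A$1$3)*(A$1$3) + (A$2$3)*(A$2$3) + (A$3$3)*(A$3$3)) = 1"
    "(-(A$1$1)*(A$1$2) + (A$2$1)*(A$2$2) + (A$3$1)*(A$3$2)) = 0"
    "(-(A$1$1)*(A$1$3) + (A$2$1)*(A$2$3) + (A$3$1)*(A$3$3)) = 0"
    "(-(A$1$2)*(A$1$3) + (A$2$2)*(A$2$3) + (A$3$2)*(A$3$3)) = 0"
proof -
  have m: "\<And>x y. mink (A *v x) (A *v y) = mink x y" using assms by (simp add: O12_def)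
  define e1 :: "real^3" where "e1 = vector [1,0,0]"
  define e2 :: "real^3" where "e2 = vector [0,1,0]"
  define e3 :: "real^3" where "e3 = vector [0,0,1]"
  note s = mink_def mv3 e1_def e2_def e3_def
  show "(-(A$1$1)*(A$1$1) + (A$2$1)*(A$2$1) + (A$3$1)*(A$3$1)) = -1" using m[of e1 e1] by (simp add: s)
  show "(-(A$1$2)*(A$1$2) + (A$2$2)*(A$2$2) + (A$3$2)*(A$3$2)) = 1" using m[of e2 e2] by (simp add: s)
  show "(-(A$1$3)*(A$1$3) + (A$2$3)*(A$2$3) + (A$3$3)*(A$3$3)) = 1" using m[of e3 e3] by (simp add: s)
  show "(-(A$1$1)*(A$1$2) + (A$2$1)*(A$2$2) + (A$3$1)*(A$3$2)) = 0" using m[of e1 e2] by (simp add: s)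
  show "(-(A$1$1)*(A$1$3) + (A$2$1)*(A$2$3) + (A$3$1)*(A$3$3)) = 0" using m[of e1 e3] by (simp add: s)
  show "(-(A$1$2)*(A$1$3) + (A$2$2)*(A$2$3) + (A$3$2)*(A$3$3)) = 0" using m[of e2 e3] by (simp add: s)
qed

definition Jm :: "real^3^3" where
  "Jm = (\<chi> i j. if i = j then (if i = 1 then -1 else 1) else 0)"

lemma Jm_entries: "Jm$1$1 = -1" "Jm$2$2 = 1" "Jm$3$3 = 1" "Jm$1$2 = 0" "Jm$1$3 = 0"
  "Jm$2$1 = 0" "Jm$2$3 = 0" "Jm$3$1 = 0" "Jm$3$2 = 0"
  by (simp_all add: Jm_def)

lemma det_Jm: "det Jm = -1"
  by (simp add: det_3 Jm_entries)

lemma O12_det_sq: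
  assumes "A \<in> O12" shows "det A * det A = 1"
proof -
  note e = O12_eqs[OF assms]
  have "transpose A ** Jm ** A = Jm"
    unfolding vec_eq_iff forall_3
    using e by (simp add: matrix_matrix_mult_def sum_3 transpose_def Jm_def algebra_simps)
  then have "det (transpose A ** Jm ** A) = det Jm" by simp
  then show ?thesis by (simp add: det_mul det_transpose det_Jm)
qed

lemma O12_11:
  assumes "A \<in> O12" shows "A$1$1 * A$1$1 \<ge> 1"
proof -
  have "A$2$1*A$2$1 \<ge> 0" "A$3$1*A$3$1 \<ge> 0" by simp_all
  then show ?thesis using O12_eqs(1)[OF assms] by linarith
qed

lemma O12_0_props:
  assumes "A \<in> O12_0"
  shows "A \<in> O12" "A$1$1 \<ge> 1" "det A = 1"
proof -
  let ?S = "connected_component_set O12 (mat 1)"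
  have AS: "A \<in> ?S" using assms by (simp add: O12_0_def)
  show AO: "A \<in> O12" using AS connected_component_subset by blast
  have IO: "mat 1 \<in> O12" by (simp add: O12_def)
  have IS: "mat 1 \<in> ?S" using IO by (simp add: connected_component_refl)
  have cS: "connected ?S" by simp
  have c1: "connected ((\<lambda>B. B$1$1) ` ?S)"
    by (rule connected_continuous_image[OF _ cS]) (intro continuous_intros)
  have c2: "connected ((\<lambda>B. det B) ` ?S)"
  proof (rule connected_continuous_image[OF _ cS])
    have "continuous_on ?S (\<lambda>B::real^3^3. B$1$1 * B$2$2 * B$3$3 +
    B$1$2 * B$2$3 * B$3$1 +
    B$1$3 * B$2$1 * B$3$2 -
    B$1$1 * B$2$3 * B$3$2 -
    B$1$2 * B$2$1 * B$3$3 -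
    B$1$3 * B$2$2 * B$3$1)" by (intro continuous_intros)
    then show "continuous_on ?S det" by (simp add: det_3[abs_def])
  qed
  show "A$1$1 \<ge> 1"
  proof (rule ccontr)
    assume "\<not> A$1$1 \<ge> 1"
    have "(A$1$1 - 1)*(A$1$1+1) \<ge> 0" using O12_11[OF AO] by (simp add: algebra_simps)
    then have "A$1$1 \<le> -1" using \<open>\<not> A$1$1 \<ge> 1\<close> by (simp add: zero_le_mult_iff)
    then have "(0::real) \<in> (\<lambda>B. B$1$1) ` ?S"
    proof -
      have h1: "A$1$1 \<in> (\<lambda>B. B$1$1) ` ?S" and h2: "(mat 1::real^3^3)$1$1 \<in> (\<lambda>B. B$1$1) ` ?S"
        using AS IS by blast+
      have h3: "(mat 1::real^3^3)$1$1 = 1" by (simp add: mat_def)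
      have iv: "\<And>x y z. x \<in> (\<lambda>B. B$1$1) ` ?S \<Longrightarrow> y \<in> (\<lambda>B. B$1$1) ` ?S \<Longrightarrow> x \<le> z \<Longrightarrow> z \<le> y \<Longrightarrow> z \<in> (\<lambda>B. B$1$1) ` ?S"
        using c1 unfolding connected_iff_interval by blast
      show ?thesis by (rule iv[OF h1 h2]) (use \<open>A$1$1 \<le> -1\<close> h3 in simp_all)
    qed
    then obtain B where "B \<in> ?S" "B$1$1 = 0" by auto
    then have "B \<in> O12" using connected_component_subset by blast
    then show False using O12_11[of B] \<open>B$1$1 = 0\<close> by simp
  qed
  show "det A = 1"
  proof (rule ccontr)
    assume "det A \<noteq> 1"
    then have "det A = -1" using O12_det_sq[OF AO] power2_eq_1_iff[of "det A"] by (simp add: power2_eq_square)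
    then have "(0::real) \<in> (\<lambda>B. det B) ` ?S"
    proof -
      have h1: "det A \<in> (\<lambda>B. det B) ` ?S" and h2: "det (mat 1::real^3^3) \<in> (\<lambda>B. det B) ` ?S"
        using AS IS by blast+
      have iv: "\<And>x y z. x \<in> (\<lambda>B. det B) ` ?S \<Longrightarrow> y \<in> (\<lambda>B. det B) ` ?S \<Longrightarrow> x \<le> z \<Longrightarrow> z \<le> y \<Longrightarrow> z \<in> (\<lambda>B. det B) ` ?S"
        using c2 unfolding connected_iff_interval by blast
      show ?thesis by (rule iv[OF h1 h2]) (use \<open>det A = -1\<close> in simp_all)
    qed
    then obtain B where "B \<in> ?S" "det B = 0" by auto
    then have "B \<in> O12" using connected_component_subset by blast
    then show False using O12_det_sq[of B] \<open>det B = 0\<close> by simp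
  qed
qed
lemma sphere_iff: "z \<in> sphere (0::complex) 1 \<longleftrightarrow> Re z * Re z + Im z * Im z = 1"
  by (simp add: cmod_def power2_eq_square)

lemma lift_comps: "lift z $ 1 = 1" "lift z $ 2 = Re z" "lift z $ 3 = Im z"
  by (simp_all add: lift_def)

lemma Pi_Re: "Re (Pi x) = x$2 / x$1" and Pi_Im: "Im (Pi x) = x$3 / x$1"
  by (simp_all add: Pi_def)

lemma pos_aux:
  fixes m11 m21 m31 p1 p2 p3 :: real
  assumes "m11 > 0" "m11*m11 = 1 + m21*m21 + m31*m31"
    "-p1*p1 + p2*p2 + p3*p3 = 0" "-m11*p1 + m21*p2 + m31*p3 = -1"
  shows "p1 > 0"
proof (rule ccontr)
  assume "\<not> p1 > 0"
  then have p: "p1 \<le> 0" by simp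
  have cs: "(m21*p2 + m31*p3)^2 \<le> (m21*m21+m31*m31)*(p2*p2+p3*p3)"
  proof -
    have "(m21*m21+m31*m31)*(p2*p2+p3*p3) - (m21*p2 + m31*p3)^2 = (m21*p3 - m31*p2)^2"
      by (simp add: power2_eq_square algebra_simps)
    moreover have "(m21*p3 - m31*p2)^2 \<ge> 0" by simp
    ultimately show ?thesis by linarith
  qed
  have le0: "m21*p2 + m31*p3 = -1 + m11*p1" using assms by linarith
  have mp: "m11*p1 \<le> 0" using p assms(1) by (simp add: mult_nonneg_nonpos)
  have le: "m21*p2 + m31*p3 \<le> -1 + m11*p1" "-1 + m11*p1 \<le> -1" using le0 mp by linarith+
  have "(1 - m11*p1)^2 \<le> (m21*p2 + m31*p3)^2"
  proof -
    have "1 - m11*p1 \<le> -(m21*p2 + m31*p3)" "0 \<le> 1 - m11*p1" using le by linarith+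
    then have "(1 - m11*p1)^2 \<le> (-(m21*p2 + m31*p3))^2" by (rule power_mono)
    then show ?thesis by (simp only: power2_minus)
  qed
  also have "\<dots> \<le> (m11*m11 - 1)*(p1*p1)"
  proof -
    have h1: "p2*p2+p3*p3 = p1*p1" and h2: "m21*m21+m31*m31 = m11*m11-1" using assms by linarith+
    show ?thesis using cs unfolding h1 h2 .
  qed
  finally have "(1 - m11*p1)^2 \<le> (m11*m11 - 1)*(p1*p1)" .
  then have "1 - 2*m11*p1 + p1*p1 \<le> 0" by (simp add: power2_eq_square algebra_simps)
  moreover note mp
  moreover have "p1*p1 \<ge> 0" by simp
  ultimately show False by linarith
qed

lemma O12_lift:
  assumes "M \<in> O12" "M$1$1 > 0" "z \<in> sphere 0 1"
  shows "(M *v lift z)$1 > 0" "act M z \<in> sphere 0 1"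
    "-((M *v lift z)$1)*((M *v lift z)$1) + ((M *v lift z)$2)*((M *v lift z)$2) + ((M *v lift z)$3)*((M *v lift z)$3) = 0"
proof -
  have m: "\<And>x y. mink (M *v x) (M *v y) = mink x y" using assms by (simp add: O12_def)
  have z: "Re z * Re z + Im z * Im z = 1" using assms(3) sphere_iff by blast
  define p where "p = M *v lift z"
  have null: "-(p$1)*(p$1) + p$2*p$2 + p$3*p$3 = 0"
    using m[of "lift z" "lift z"] z unfolding p_def by (simp add: mink_def lift_comps)
  have e: "-(M$1$1)*(p$1) + M$2$1*(p$2) + M$3$1*(p$3) = -1"
    using m[of "vector [1,0,0]" "lift z"] unfolding p_def by (simp add: mink_def lift_comps mv3)
  have pos: "p$1 > 0"
    apply (rule pos_aux[OF assms(2) _ null e])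
    using O12_eqs(1)[OF assms(1)] by simp
  then show "(M *v lift z)$1 > 0" by (simp add: p_def)
  show "-((M *v lift z)$1)*((M *v lift z)$1) + ((M *v lift z)$2)*((M *v lift z)$2) + ((M *v lift z)$3)*((M *v lift z)$3) = 0"
    using null by (simp add: p_def)
  have "(p$2/p$1)*(p$2/p$1) + (p$3/p$1)*(p$3/p$1) = (p$2*p$2+p$3*p$3)/(p$1*p$1)"
    by (simp add: add_divide_distrib)
  also have "\<dots> = 1" using null pos by simp
  finally show "act M z \<in> sphere 0 1"
    unfolding sphere_iff act_def p_def[symmetric] by (simp add: Pi_Re Pi_Im)
qed
lemma lift_Pi: "x$1 \<noteq> 0 \<Longrightarrow> lift (Pi x) = (1/x$1) *\<^sub>R x"
  unfolding vec_eq_iff forall_3 by (simp add: lift_comps Pi_Re Pi_Im)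

lemma Pi_scale: "c \<noteq> 0 \<Longrightarrow> Pi (c *\<^sub>R x) = Pi x"
  by (simp add: Pi_def)

lemma Pi_lift: "Pi (lift w) = w"
  by (simp add: Pi_def lift_comps complex_eq_iff)

lemma mink_zero: "mink 0 v = 0" by (simp add: mink_def)

lemma act_inj:
  assumes "A \<in> O12" "A$1$1 > 0"
  shows "inj_on (act A) (sphere 0 1)"
proof (rule inj_onI)
  fix z z' assume z: "z \<in> sphere (0::complex) 1" and z': "z' \<in> sphere (0::complex) 1"
    and eq: "act A z = act A z'"
  have m: "\<And>x y. mink (A *v x) (A *v y) = mink x y" using assms by (simp add: O12_def)
  define p where "p = A *v lift z"
  define q where "q = A *v lift z'"
  have p1: "p$1 > 0" using O12_lift(1)[OF assms z] p_def by simp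
  have q1: "q$1 > 0" using O12_lift(1)[OF assms z'] q_def by simp
  have e2: "p$2/p$1 = q$2/q$1" and e3: "p$3/p$1 = q$3/q$1"
    using eq unfolding act_def p_def[symmetric] q_def[symmetric]
    by (metis Pi_Re, metis Pi_Im)
  define c where "c = p$1/q$1"
  have pq: "p = c *\<^sub>R q"
    unfolding vec_eq_iff forall_3 c_def using p1 q1 e2 e3 by (simp add: field_simps)
  have zero: "A *v (lift z - c *\<^sub>R lift z') = 0"
    using pq by (simp add: matrix_vector_mult_diff_distrib matrix_vector_mult_scaleR p_def q_def)
  have h1: "mink (lift z - c *\<^sub>R lift z') (vector [1,0,0]) = 0"
    using m[of "lift z - c *\<^sub>R lift z'" "vector [1,0,0]"] zero by (simp add: mink_zero)
  have h2: "mink (lift z - c *\<^sub>R lift z') (vector [0,1,0]) = 0"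
    using m[of "lift z - c *\<^sub>R lift z'" "vector [0,1,0]"] zero by (simp add: mink_zero)
  have h3: "mink (lift z - c *\<^sub>R lift z') (vector [0,0,1]) = 0"
    using m[of "lift z - c *\<^sub>R lift z'" "vector [0,0,1]"] zero by (simp add: mink_zero)
  have c1: "c = 1" using h1 by (simp add: mink_def lift_comps)
  show "z = z'" using h2 h3 c1 by (simp add: mink_def lift_comps complex_eq_iff)
qed

lemma act_surj:
  assumes "A \<in> O12" "A$1$1 > 0" "w \<in> sphere 0 1"
  shows "\<exists>z \<in> sphere 0 1. act A z = w"
proof -
  note e = O12_eqs[OF assms(1)]
  define B where "B = Jm ** transpose A ** Jm"
  have BA: "B ** A = mat 1"
    unfolding vec_eq_iff forall_3 B_def
    using e by (simp add: matrix_matrix_mult_def sum_3 transpose_def Jm_def algebra_simps mat_def)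
  then have AB: "A ** B = mat 1" by (simp add: matrix_left_right_inverse)
  have ABx: "\<And>x. A *v (B *v x) = x" by (simp add: matrix_vector_mul_assoc AB)
  have m: "\<And>x y. mink (A *v x) (A *v y) = mink x y" using assms by (simp add: O12_def)
  have BO: "B \<in> O12" unfolding O12_def
  proof (clarify)
    fix x y show "mink (B *v x) (B *v y) = mink x y" using m[of "B *v x" "B *v y"] by (simp add: ABx)
  qed
  have B11: "B$1$1 > 0" using assms(2)
    by (simp add: B_def matrix_matrix_mult_def sum_3 transpose_def Jm_def)
  define q where "q = B *v lift w"
  have q1: "q$1 > 0" using O12_lift(1)[OF BO B11 assms(3)] q_def by simp
  define z where "z = act B w"
  have zs: "z \<in> sphere 0 1" using O12_lift(2)[OF BO B11 assms(3)] z_def by simp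
  have "lift z = (1/q$1) *\<^sub>R q" unfolding z_def act_def q_def[symmetric] using q1 by (simp add: lift_Pi)
  then have "A *v lift z = (1/q$1) *\<^sub>R lift w" by (simp add: matrix_vector_mult_scaleR q_def ABx)
  then have "act A z = w" unfolding act_def using q1 by (simp add: Pi_scale Pi_lift)
  then show ?thesis using zs by blast
qed
definition DPi :: "real^3 \<Rightarrow> real^3 \<Rightarrow> complex" where
  "DPi x u = Complex ((u$2*x$1 - x$2*u$1)/(x$1*x$1)) ((u$3*x$1 - x$3*u$1)/(x$1*x$1))"

lemma has_derivative_nth: "((\<lambda>y::real^3. y$i) has_derivative (\<lambda>u. u$i)) (at x)"
  by (rule bounded_linear.has_derivative[OF bounded_linear_vec_nth has_derivative_ident])

lemma Pi_alt: "Pi = (\<lambda>y. complex_of_real (y$2/y$1) + \<i> * complex_of_real (y$3/y$1))"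
  by (auto simp: Pi_def complex_eq_iff)

lemma Pi_deriv: assumes "x$1 \<noteq> 0" shows "(Pi has_derivative DPi x) (at x)"
  unfolding Pi_alt
  apply (rule derivative_eq_intros has_derivative_nth | use assms in simp)+
  apply (rule ext)
  apply (simp add: DPi_def complex_eq_iff flip: of_real_inverse of_real_mult of_real_divide)
  using assms apply (simp add: field_simps power2_eq_square)
  done
definition Dlift :: "complex \<Rightarrow> real^3" where
  "Dlift h = vector [0, Re h, Im h]"

lemma lift_deriv: "(lift has_derivative Dlift) (at z)"
proof -
  have eq: "lift = (\<lambda>h. vector [1,0,0] + (Re h *\<^sub>R vector [0,1,0] + Im h *\<^sub>R vector [0,0,1]))"
    by (rule ext) (simp add: vec_eq_iff forall_3 lift_comps)
  have eq2: "Dlift = (\<lambda>h. Re h *\<^sub>R vector [0,1,0] + Im h *\<^sub>R vector [0,0,1])"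
    by (rule ext) (simp add: vec_eq_iff forall_3 Dlift_def)
  show ?thesis unfolding eq eq2
    by (rule derivative_eq_intros | simp)+
qed

lemma act_deriv:
  assumes "(A *v lift z)$1 \<noteq> 0"
  shows "(act A has_derivative (\<lambda>h. DPi (A *v lift z) (A *v Dlift h))) (at z)"
proof -
  have f: "((\<lambda>\<zeta>. A *v lift \<zeta>) has_derivative (\<lambda>h. A *v Dlift h)) (at z)"
    using bounded_linear.has_derivative[OF matrix_vector_mul_bounded_linear lift_deriv] .
  have "((Pi \<circ> (\<lambda>\<zeta>. A *v lift \<zeta>)) has_derivative (DPi (A *v lift z) \<circ> (\<lambda>h. A *v Dlift h))) (at z)"
    by (rule diff_chain_at[OF f Pi_deriv[OF assms]])
  moreover have "act A = Pi \<circ> (\<lambda>\<zeta>. A *v lift \<zeta>)" by (rule ext) (simp add: act_def)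
  ultimately show ?thesis by (simp add: o_def)
qed

lemma mcross_eq:
  "mcross x y = vector [-(x$2*y$3 - x$3*y$2), x$3*y$1 - x$1*y$3, x$1*y$2 - x$2*y$1]"
  unfolding mcross_def
proof (rule the_equality)
  show "\<forall>v. mink (vector [-(x$2*y$3 - x$3*y$2), x$3*y$1 - x$1*y$3, x$1*y$2 - x$2*y$1]) v =
        det (vector [x, y, v] :: real^3^3)"
    by (simp add: mink_def det_3 algebra_simps)
next
  fix u assume h: "\<forall>v. mink u v = det (vector [x, y, v] :: real^3^3)"
  have h1: "mink u (vector [1,0,0]) = det (vector [x, y, vector [1,0,0]] :: real^3^3)" using h by blast
  have h2: "mink u (vector [0,1,0]) = det (vector [x, y, vector [0,1,0]] :: real^3^3)" using h by blast
  have h3: "mink u (vector [0,0,1]) = det (vector [x, y, vector [0,0,1]] :: real^3^3)" using h by blast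
  show "u = vector [-(x$2*y$3 - x$3*y$2), x$3*y$1 - x$1*y$3, x$1*y$2 - x$2*y$1]"
    using h1 h2 h3 unfolding vec_eq_iff forall_3 by (simp add: mink_def det_3 algebra_simps)
qed

lemma Killing_eq:
  assumes "w \<in> sphere 0 1"
  shows "Killing \<sigma> w = \<i> * w * complex_of_real (mink (lift w) \<sigma>)"
proof -
  have fd: "frechet_derivative Pi (at (lift w)) = DPi (lift w)"
    using Pi_deriv[of "lift w"] by (simp add: lift_comps frechet_derivative_at[symmetric])
  have w: "Re w * Re w + Im w * Im w = 1" using assms sphere_iff by blast
  have r: "Re w * Re w = 1 - Im w * Im w" using w by simp
  have r2: "\<And>c. Im w * (Im w * c) + Re w * (Re w * c) = c"
  proof -
    fix c have "Im w * (Im w * c) + Re w * (Re w * c) = (Re w * Re w + Im w * Im w) * c"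
      by (simp add: algebra_simps)
    then show "Im w * (Im w * c) + Re w * (Re w * c) = c" using w by simp
  qed
  show ?thesis unfolding Killing_def fd
    apply (simp add: DPi_def mcross_eq lift_comps mink_def complex_eq_iff algebra_simps r)
    using r2 by simp
qed
lemma push_alg:
  fixes a11 a12 a13 a21 a22 a23 a31 a32 a33 z1 z2 :: real
  assumes "(- (a12*a33 - a13*a32)) = - a21" "(a11*a33 - a13*a31) = a22" "(- (a11*a32 - a12*a31)) = a23"
    "(a12*a23 - a13*a22) = - a31" "(- (a11*a23 - a13*a21)) = a32" "(a11*a22 - a12*a21) = a33"
    "z1*z1 + z2*z2 = 1"
  shows "(a11 + a12*z1 + a13*z2) * (a22*(-z2) + a23*z1) - (a21 + a22*z1 + a23*z2) * (a12*(-z2) + a13*z1)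
           = - (a31 + a32*z1 + a33*z2)"
    "(a11 + a12*z1 + a13*z2) * (a32*(-z2) + a33*z1) - (a31 + a32*z1 + a33*z2) * (a12*(-z2) + a13*z1)
           = (a21 + a22*z1 + a23*z2)"
proof -
  have "(a11 + a12*z1 + a13*z2) * (a22*(-z2) + a23*z1) - (a21 + a22*z1 + a23*z2) * (a12*(-z2) + a13*z1)
      = (a12*a23 - a13*a22)*(z1*z1+z2*z2) + (- (a11*a23 - a13*a21))*(-z1) + (a11*a22 - a12*a21)*(-z2)"
    by algebra
  then show "(a11 + a12*z1 + a13*z2) * (a22*(-z2) + a23*z1) - (a21 + a22*z1 + a23*z2) * (a12*(-z2) + a13*z1)
           = - (a31 + a32*z1 + a33*z2)" using assms by simp
  have "(a11 + a12*z1 + a13*z2) * (a32*(-z2) + a33*z1) - (a31 + a32*z1 + a33*z2) * (a12*(-z2) + a13*z1)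
      = - ((- (a12*a33 - a13*a32))*(z1*z1+z2*z2) + (a11*a33 - a13*a31)*(-z1) + (- (a11*a32 - a12*a31))*(-z2))"
    by algebra
  then show "(a11 + a12*z1 + a13*z2) * (a32*(-z2) + a33*z1) - (a31 + a32*z1 + a33*z2) * (a12*(-z2) + a13*z1)
           = (a21 + a22*z1 + a23*z2)" using assms by simp
qed

lemma push_eq:
  assumes AO: "A \<in> O12" and A11: "A$1$1 > 0" and d: "det A = 1" and z: "z \<in> sphere 0 1"
  shows "frechet_derivative (act A) (at z) (\<i> * z * complex_of_real t)
         = \<i> * act A z * complex_of_real (t / (A *v lift z)$1)"
proof -
  define p where "p = A *v lift z"
  have p1: "p$1 > 0" using O12_lift(1)[OF AO A11 z] p_def by simp
  have fd: "frechet_derivative (act A) (at z) = (\<lambda>h. DPi p (A *v Dlift h))"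
    using act_deriv[of A z] p1 frechet_derivative_at unfolding p_def by force
  define v where "v = A *v vector [0, -Im z, Re z]"
  have u: "A *v Dlift (\<i> * z * complex_of_real t) = t *\<^sub>R v"
    by (simp add: Dlift_def v_def vec_eq_iff forall_3 mv3 algebra_simps)
  have pi: "\<And>i. p$i = A$i$1 + A$i$2*Re z + A$i$3*Im z" by (simp add: p_def mv3 lift_comps)
  have vi: "\<And>i. v$i = A$i$2*(-Im z) + A$i$3*Re z" by (simp add: v_def mv3)
  have dd: "A$1$1 * A$2$2 * A$3$3 + A$1$2 * A$2$3 * A$3$1 + A$1$3 * A$2$1 * A$3$2 -
    A$1$1 * A$2$3 * A$3$2 - A$1$2 * A$2$1 * A$3$3 - A$1$3 * A$2$2 * A$3$1 = 1"
    using d by (simp add: det_3)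
  note cf = cof_alg[OF O12_eqs[OF AO] dd]
  have zz: "Re z * Re z + Im z * Im z = 1" using z sphere_iff by blast
  note pa = push_alg[OF cf(4-9) zz]
  have s1: "p$1* v$2 - p$2* v$1 = -p$3" unfolding pi vi by (rule pa(1))
  have s2: "p$1* v$3 - p$3* v$1 = p$2" unfolding pi vi by (rule pa(2))
  have w: "act A z = Complex (p$2/p$1) (p$3/p$1)" by (simp add: act_def p_def Pi_def)
  have r1: "t* v$2*p$1 - p$2*(t* v$1) = -p$3*t" proof -
    have "t* v$2*p$1 - p$2*(t* v$1) = t*(p$1* v$2 - p$2* v$1)" by (simp add: algebra_simps)
    then show ?thesis using s1 by simp
  qed
  have r2: "t* v$3*p$1 - p$3*(t* v$1) = p$2*t" proof -
    have "t* v$3*p$1 - p$3*(t* v$1) = t*(p$1* v$3 - p$3* v$1)" by (simp add: algebra_simps)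
    then show ?thesis using s2 by simp
  qed
  have re: "Re (DPi p (t *\<^sub>R v)) = -p$3*t/(p$1*p$1)"
    using r1 by (simp add: DPi_def)
  have im: "Im (DPi p (t *\<^sub>R v)) = p$2*t/(p$1*p$1)"
    using r2 by (simp add: DPi_def)
  have re2: "Re (\<i> * Complex (p$2/p$1) (p$3/p$1) * complex_of_real (t / p$1)) = -p$3*t/(p$1*p$1)"
    by simp
  have im2: "Im (\<i> * Complex (p$2/p$1) (p$3/p$1) * complex_of_real (t / p$1)) = p$2*t/(p$1*p$1)"
    by simp
  show ?thesis unfolding fd u w p_def[symmetric]
    using re im re2 im2 by (simp only: complex_eq_iff)
qed
lemma supp_eq:
  assumes "w \<noteq> 0" "Y w = \<i> * w * complex_of_real s"
  shows "supp Y w = s"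
  unfolding supp_def
proof (rule the_equality)
  show "Y w = \<i> * w * complex_of_real s" by (rule assms(2))
next
  fix t assume "Y w = \<i> * w * complex_of_real t"
  then have "\<i> * w * complex_of_real t = \<i> * w * complex_of_real s" using assms(2) by metis
  moreover have "\<i> * w \<noteq> 0" using assms(1) by simp
  ultimately have "complex_of_real t = complex_of_real s" by (metis mult_cancel_left)
  then show "t = s" by simp
qed

lemma Is_eq: "Is A \<sigma> (z, s) = (act A z, s / (A *v lift z)$1 + mink (lift (act A z)) \<sigma>)"
  by (simp add: Is_def mink_def)

theorem lemma2p12:
  fixes X :: "complex \<Rightarrow> complex" and A :: "real^3^3" and \<sigma> :: "real^3"
  assumes "\<forall>z\<in>sphere 0 1. \<exists>t::real. X z = \<i> * z * complex_of_real t"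
    and "A \<in> O12_0"
  shows "gr (supp (\<lambda>w. pushforward A X w + Killing \<sigma> w)) = Is A \<sigma> ` gr (supp X)"
proof -
  have AO: "A \<in> O12" and A11: "A$1$1 > 0" and d: "det A = 1"
    using O12_0_props[OF assms(2)] by auto
  have nz: "\<And>z. z \<in> sphere (0::complex) 1 \<Longrightarrow> z \<noteq> 0" by auto
  have Xs: "\<And>z. z \<in> sphere 0 1 \<Longrightarrow> X z = \<i> * z * complex_of_real (supp X z)"
  proof -
    fix z :: complex assume z: "z \<in> sphere 0 1"
    then obtain t where t: "X z = \<i> * z * complex_of_real t" using assms(1) by blast
    then have "supp X z = t" using supp_eq[OF nz[OF z]] by blast
    then show "X z = \<i> * z * complex_of_real (supp X z)" using t by simp
  qed
  define F where "F = (\<lambda>w. pushforward A X w + Killing \<sigma> w)"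
  have key: "\<And>z. z \<in> sphere 0 1 \<Longrightarrow>
     supp F (act A z) = supp X z / (A *v lift z)$1 + mink (lift (act A z)) \<sigma>"
  proof -
    fix z :: complex assume z: "z \<in> sphere 0 1"
    have ws: "act A z \<in> sphere 0 1" using O12_lift(2)[OF AO A11 z] .
    have inv: "inv_into (sphere 0 1) (act A) (act A z) = z"
      by (rule inv_into_f_f[OF act_inj[OF AO A11] z])
    have pf: "pushforward A X (act A z) = \<i> * act A z * complex_of_real (supp X z / (A *v lift z)$1)"
      unfolding pushforward_def Let_def inv Xs[OF z] by (rule push_eq[OF AO A11 d z])
    have "F (act A z) = \<i> * act A z * complex_of_real (supp X z / (A *v lift z)$1 + mink (lift (act A z)) \<sigma>)"
      unfolding F_def pf Killing_eq[OF ws] by (simp add: algebra_simps)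
    then show "supp F (act A z) = supp X z / (A *v lift z)$1 + mink (lift (act A z)) \<sigma>"
      by (rule supp_eq[OF nz[OF ws]])
  qed
  show ?thesis
    unfolding F_def[symmetric]
  proof (rule set_eqI, rule iffI)
    fix x assume "x \<in> gr (supp F)"
    then obtain w where w: "w \<in> sphere 0 1" "x = (w, supp F w)" by (auto simp: gr_def)
    obtain z where z: "z \<in> sphere 0 1" "act A z = w" using act_surj[OF AO A11 w(1)] by blast
    have "x = Is A \<sigma> (z, supp X z)" using w z key[OF z(1)] by (simp add: Is_eq)
    moreover have "(z, supp X z) \<in> gr (supp X)" using z by (auto simp: gr_def)
    ultimately show "x \<in> Is A \<sigma> ` gr (supp X)" by blast
  next
    fix x assume "x \<in> Is A \<sigma> ` gr (supp X)"
    then obtain z where z: "z \<in> sphere 0 1" "x = Is A \<sigma> (z, supp X z)" by (auto simp: gr_def)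
    have "x = (act A z, supp F (act A z))" using z key[OF z(1)] by (simp add: Is_eq)
    moreover have "act A z \<in> sphere 0 1" using O12_lift(2)[OF AO A11 z(1)] .
    ultimately show "x \<in> gr (supp F)" by (auto simp: gr_def)
  qed
qed
end
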